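(* Let $k\ge1$, let $\mathbf{T}_1,\dots,\mathbf{T}_k$ be finite trees, and let $A$ be a permutation (a bijective FDS). Then $C_k(\mathbf{T}_1,\dots,\mathbf{T}_k)\times A=(C_kA)(\mathbf{T}_1,\dots,\mathbf{T}_k)$.
   Context: A finite dynamical system (FDS) is a function $A:S_A\to S_A$ on a finite set, considered up to isomorphism of functional graphs (arcs $x\to A(x)$). The product $AB$ acts on $S_A\times S_B$ by $(a,b)\mapsto(A(a),B(b))$. $C_n$ is the FDS whose functional graph is a directed cycle of length $n$. A (finite) tree is a rooted in-tree: an acyclic weakly connected digraph with a root having no outgoing arc, every other vertex having one outgoing arc towards the root. For a permutation $B$ all of whose cycle lengths are multiples of $k$ and trees $\mathbf{T}_1,\dots,\mathbf{T}_k$, $B(\mathbf{T}_1,\dots,\mathbf{T}_k)$ denotes the FDS obtained by traversing each cycle of $B$ following the arrows from some starting state and, for the $i$-th state encountered ($i=1,2,\dots$), attaching a copy of $\mathbf{T}_{((i-1)\bmod k)+1}$ by identifying its root with that state (the tree's arcs keep pointing towards the root). Note that every cycle length of $C_kA$ is a multiple of $k$. *)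

theory Defs
  imports Main
begin

text \<open>A finite dynamical system (FDS) is represented by its finite state set and its
  transition function (only its values on the state set matter).\<close>
type_synonym 'a fds = "'a set \<times> ('a \<Rightarrow> 'a)"

definition is_fds :: "'a fds \<Rightarrow> bool" where
  "is_fds A \<longleftrightarrow> finite (fst A) \<and> (\<forall>x\<in>fst A. snd A x \<in> fst A)"

definition is_permutation_fds :: "'a fds \<Rightarrow> bool" where
  "is_permutation_fds A \<longleftrightarrow> is_fds A \<and> bij_betw (snd A) (fst A) (fst A)"

definition fds_iso :: "'a fds \<Rightarrow> 'b fds \<Rightarrow> bool" where
  "fds_iso A B \<longleftrightarrow> (\<exists>h. bij_betw h (fst A) (fst B) \<and>
      (\<forall>x\<in>fst A. h (snd A x) = snd B (h x)))"

definition fds_prod :: "'a fds \<Rightarrow> 'b fds \<Rightarrow> ('a \<times> 'b) fds" where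
  "fds_prod A B = (fst A \<times> fst B, map_prod (snd A) (snd B))"

definition cycle_fds :: "nat \<Rightarrow> nat fds" where
  "cycle_fds n = ({0..<n}, \<lambda>i. Suc i mod n)"

text \<open>The root is
  encoded as the unique vertex with \<open>parent r = r\<close> (it has no outgoing arc);
  every other vertex \<open>v\<close> has the arc \<open>v \<rightarrow> parent v\<close>, and every vertex reaches the
  root (acyclicity and weak connectedness).\<close>
type_synonym 't tree = "'t set \<times> ('t \<Rightarrow> 't) \<times> 't"

definition tree_verts :: "'t tree \<Rightarrow> 't set" where "tree_verts T = fst T"
definition tree_parent :: "'t tree \<Rightarrow> 't \<Rightarrow> 't" where "tree_parent T = fst (snd T)"
definition tree_root :: "'t tree \<Rightarrow> 't" where "tree_root T = snd (snd T)"

definition is_tree :: "'t tree \<Rightarrow> bool" where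
  "is_tree T \<longleftrightarrow> finite (tree_verts T) \<and> tree_root T \<in> tree_verts T \<and>
     (\<forall>v\<in>tree_verts T. tree_parent T v \<in> tree_verts T) \<and>
     tree_parent T (tree_root T) = tree_root T \<and>
     (\<forall>v\<in>tree_verts T. \<exists>n. (tree_parent T ^^ n) v = tree_root T)"

text \<open>A phase function for \<open>B\<close> modulo \<open>k\<close>: traversing each cycle of \<open>B\<close> from a
  chosen starting state (phase 0), the \<open>i\<close>-th state encountered (\<open>i = 1, 2, \<dots>\<close>)
  has phase \<open>(i - 1) mod k\<close>.  Such a function exists iff all cycle lengths of the
  permutation \<open>B\<close> are multiples of \<open>k\<close>; choosing one amounts to choosing the
  starting states.\<close>
definition is_phase :: "nat \<Rightarrow> 'a fds \<Rightarrow> ('a \<Rightarrow> nat) \<Rightarrow> bool" where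
  "is_phase k B \<phi> \<longleftrightarrow> (\<forall>x\<in>fst B. \<phi> x < k \<and> \<phi> (snd B x) = Suc (\<phi> x) mod k)"

definition the_phase :: "nat \<Rightarrow> 'a fds \<Rightarrow> 'a \<Rightarrow> nat" where
  "the_phase k B = (SOME \<phi>. is_phase k B \<phi>)"

text \<open>\<open>B(T_1,\<dots>,T_k)\<close>: to the state \<open>x\<close> of phase \<open>j\<close> a copy of \<open>T_(j+1)\<close> is attached
  by identifying its root with \<open>x\<close>.  States are pairs \<open>(x, v)\<close> with \<open>v\<close> a vertex of
  the tree attached at \<open>x\<close>; \<open>(x, root)\<close> plays the role of \<open>x\<close>.\<close>
definition attach_trees :: "nat \<Rightarrow> 'a fds \<Rightarrow> (nat \<Rightarrow> 't tree) \<Rightarrow> ('a \<times> 't) fds" where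
  "attach_trees k B T =
    (let \<phi> = the_phase k B; tr = (\<lambda>x. T (\<phi> x + 1)) in
     ({(x, v). x \<in> fst B \<and> v \<in> tree_verts (tr x)},
      \<lambda>(x, v). if v = tree_root (tr x)
               then (snd B x, tree_root (tr (snd B x)))
               else (x, tree_parent (tr x) v)))"

end

theory Submission
  imports Defs
begin

definition attach_with :: "('a \<Rightarrow> nat) \<Rightarrow> 'a fds \<Rightarrow> (nat \<Rightarrow> 't tree) \<Rightarrow> ('a \<times> 't) fds" where
  "attach_with \<phi> B T =
    (let tr = (\<lambda>x. T (\<phi> x + 1)) in
     ({(x, v). x \<in> fst B \<and> v \<in> tree_verts (tr x)},
      \<lambda>(x, v). if v = tree_root (tr x)
               then (snd B x, tree_root (tr (snd B x)))
               else (x, tree_parent (tr x) v)))"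

lemma attach_trees_with: "attach_trees k B T = attach_with (the_phase k B) B T"
  unfolding attach_trees_def attach_with_def by (simp add: Let_def)

lemma the_phase_ok: "is_phase k B \<phi> \<Longrightarrow> is_phase k B (the_phase k B)"
  unfolding the_phase_def by (rule someI[of "is_phase k B"])

lemma fds_iso_trans: "fds_iso A B \<Longrightarrow> fds_iso B C \<Longrightarrow> fds_iso A C"
  unfolding fds_iso_def
proof (elim exE conjE)
  fix h g assume h: "bij_betw h (fst A) (fst B)" "\<forall>x\<in>fst A. h (snd A x) = snd B (h x)"
    and g: "bij_betw g (fst B) (fst C)" "\<forall>x\<in>fst B. g (snd B x) = snd C (g x)"
  show "\<exists>f. bij_betw f (fst A) (fst C) \<and> (\<forall>x\<in>fst A. f (snd A x) = snd C (f x))"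
    apply (rule exI[of _ "g \<circ> h"])
    using h g bij_betw_trans[OF h(1) g(1)] by (auto simp: bij_betw_def)
qed

definition dep :: "'t tree \<Rightarrow> 't \<Rightarrow> nat" where
  "dep T v = (LEAST n. (tree_parent T ^^ n) v = tree_root T)"

lemma dep_root: "dep T (tree_root T) = 0"
  unfolding dep_def by (rule Least_eq_0) simp

lemma dep_parent:
  assumes "is_tree T" "v \<in> tree_verts T" "v \<noteq> tree_root T"
  shows "dep T v = Suc (dep T (tree_parent T v))"
proof -
  let ?p = "tree_parent T" and ?r = "tree_root T"
  obtain n where n: "(?p ^^ n) v = ?r" using assms unfolding is_tree_def by blast
  have ex: "(?p ^^ dep T v) v = ?r" unfolding dep_def using n by (rule LeastI)
  have nz: "dep T v \<noteq> 0" proof assume "dep T v = 0" thus False using ex assms(3) by simp qed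
  then obtain m where m: "dep T v = Suc m" by (cases "dep T v") auto
  have pm: "(?p ^^ m) (?p v) = ?r" using ex m by (simp add: funpow_swap1)
  have le1: "dep T (?p v) \<le> m" unfolding dep_def using pm by (rule Least_le)
  have ex2: "(?p ^^ dep T (?p v)) (?p v) = ?r" unfolding dep_def using pm by (rule LeastI)
  hence "(?p ^^ Suc (dep T (?p v))) v = ?r" by (simp add: funpow_swap1)
  hence "dep T v \<le> Suc (dep T (?p v))" unfolding dep_def by (rule Least_le)
  with le1 m show ?thesis by simp
qed

lemma phase_iter:
  assumes "is_fds B" "is_phase k B \<chi>" "x \<in> fst B"
  shows "\<chi> ((snd B ^^ t) x) = (\<chi> x + t) mod k \<and> (snd B ^^ t) x \<in> fst B"
proof (induction t)
  case 0 thus ?case using assms unfolding is_phase_def by simp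
next
  case (Suc t)
  thus ?case using assms unfolding is_phase_def is_fds_def by (auto simp: mod_Suc_eq)
qed

lemma phase_change_iso:
  assumes k: "k \<ge> 1" and P: "is_permutation_fds B"
    and c1: "is_phase k B \<chi>1" and c2: "is_phase k B \<chi>2"
  shows "fds_iso (attach_with \<chi>1 B (T :: nat \<Rightarrow> 't tree)) (attach_with \<chi>2 B T)"
proof -
  let ?f = "snd B" and ?S = "fst B"
  have fds: "is_fds B" and bij: "bij_betw ?f ?S ?S" using P unfolding is_permutation_fds_def by auto
  define \<delta> where "\<delta> x = (\<chi>1 x + k - \<chi>2 x) mod k" for x
  have lt1: "\<chi>1 x < k" and lt2: "\<chi>2 x < k" if "x \<in> ?S" for x
    using c1 c2 that unfolding is_phase_def by auto
  have it1: "\<chi>1 ((?f ^^ t) x) = (\<chi>1 x + t) mod k" and it2: "\<chi>2 ((?f ^^ t) x) = (\<chi>2 x + t) mod k"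
     and inS: "(?f ^^ t) x \<in> ?S" if "x \<in> ?S" for x t
    using phase_iter[OF fds c1 that] phase_iter[OF fds c2 that] by auto
  have dint: "int (\<delta> x) = (int (\<chi>1 x) - int (\<chi>2 x)) mod int k" if "x \<in> ?S" for x
  proof -
    have "int (\<delta> x) = int (\<chi>1 x + k - \<chi>2 x) mod int k" unfolding \<delta>_def by (simp add: of_nat_mod)
    also have "\<dots> = (int (\<chi>1 x) - int (\<chi>2 x) + int k) mod int k" using lt2[OF that]
      by (simp add: of_nat_diff algebra_simps)
    also have "\<dots> = (int (\<chi>1 x) - int (\<chi>2 x)) mod int k" by (rule mod_add_self2)
    finally show ?thesis .
  qed
  have d1: "\<delta> (?f x) = \<delta> x" if "x \<in> ?S" for x
  proof -
    have fx: "?f x \<in> ?S" using fds that unfolding is_fds_def by auto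
    have "int (\<delta> (?f x)) = (int ((\<chi>1 x + 1) mod k) - int ((\<chi>2 x + 1) mod k)) mod int k"
      using dint[OF fx] c1 c2 that unfolding is_phase_def by simp
    also have "\<dots> = ((int (\<chi>1 x) + 1) - (int (\<chi>2 x) + 1)) mod int k"
      by (metis mod_diff_eq of_nat_Suc of_nat_mod Suc_eq_plus1 add.commute)
    also have "\<dots> = int (\<delta> x)" using dint[OF that] by simp
    finally show ?thesis by simp
  qed
  have dinv: "\<delta> ((?f ^^ t) x) = \<delta> x" if "x \<in> ?S" for x t
    by (induction t) (auto simp: d1 inS that)
  define g where "g x = (?f ^^ \<delta> x) x" for x
  have gS: "g x \<in> ?S" if "x \<in> ?S" for x unfolding g_def using inS[OF that] .
  have dg: "\<delta> (g x) = \<delta> x" if "x \<in> ?S" for x unfolding g_def using dinv[OF that] .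
  have cg: "\<chi>2 (g x) = \<chi>1 x" if "x \<in> ?S" for x
  proof -
    have "\<chi>2 (g x) = (\<chi>2 x + \<delta> x) mod k" unfolding g_def using it2[OF that] .
    also have "int \<dots> = (int (\<chi>2 x) + ((int (\<chi>1 x) - int (\<chi>2 x)) mod int k)) mod int k"
      using dint[OF that] by (simp add: of_nat_mod)
    also have "\<dots> = int (\<chi>1 x) mod int k" by (simp add: mod_add_right_eq)
    also have "\<dots> = int (\<chi>1 x)" using lt1[OF that] by simp
    finally show ?thesis by simp
  qed
  have gf: "g (?f x) = ?f (g x)" if "x \<in> ?S" for x
    unfolding g_def using d1[OF that] by (simp add: funpow_swap1)
  have ginj: "inj_on g ?S"
  proof (rule inj_onI)
    fix x y assume xy: "x \<in> ?S" "y \<in> ?S" "g x = g y"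
    have "\<delta> x = \<delta> y" using dg[OF xy(1)] dg[OF xy(2)] xy(3) by simp
    hence "(?f ^^ \<delta> x) x = (?f ^^ \<delta> x) y" using xy(3) unfolding g_def by simp
    moreover have "inj_on (?f ^^ \<delta> x) ?S" using bij_betw_funpow[OF bij] bij_betw_def by blast
    ultimately show "x = y" using xy by (meson inj_onD)
  qed
  have gsurj: "g ` ?S = ?S"
    using fds ginj gS by (intro endo_inj_surj) (auto simp: is_fds_def)
  define h where "h = (\<lambda>(x, v). (g x, v :: 't))"
  show ?thesis unfolding fds_iso_def
  proof (intro exI[of _ h] conjI)
    show "bij_betw h (fst (attach_with \<chi>1 B T)) (fst (attach_with \<chi>2 B T))"
      unfolding bij_betw_def
    proof
      show "inj_on h (fst (attach_with \<chi>1 B T))"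
        using ginj unfolding h_def attach_with_def inj_on_def by (auto simp: Let_def)
      show "h ` fst (attach_with \<chi>1 B T) = fst (attach_with \<chi>2 B T)"
      proof
        show "h ` fst (attach_with \<chi>1 B T) \<subseteq> fst (attach_with \<chi>2 B T)"
          unfolding h_def attach_with_def using gS cg by (auto simp: Let_def)
        show "fst (attach_with \<chi>2 B T) \<subseteq> h ` fst (attach_with \<chi>1 B T)"
        proof
          fix p assume "p \<in> fst (attach_with \<chi>2 B T)"
          then obtain y v where p: "p = (y, v)" "y \<in> ?S" "v \<in> tree_verts (T (\<chi>2 y + 1))"
            unfolding attach_with_def by (auto simp: Let_def)
          then obtain x where x: "x \<in> ?S" "y = g x" using gsurj by blast
          show "p \<in> h ` fst (attach_with \<chi>1 B T)"
            unfolding attach_with_def h_def using p x cg[OF x(1)]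
            by (auto simp: Let_def image_iff intro!: bexI[of _ "(x, v)"])
        qed
      qed
    qed
    show "\<forall>p\<in>fst (attach_with \<chi>1 B T). h (snd (attach_with \<chi>1 B T) p) = snd (attach_with \<chi>2 B T) (h p)"
    proof
      fix p assume "p \<in> fst (attach_with \<chi>1 B T)"
      then obtain x v where p: "p = (x, v)" "x \<in> ?S"
        unfolding attach_with_def by (auto simp: Let_def)
      have fx: "?f x \<in> ?S" using fds p unfolding is_fds_def by auto
      show "h (snd (attach_with \<chi>1 B T) p) = snd (attach_with \<chi>2 B T) (h p)"
        unfolding attach_with_def h_def using p cg[OF p(2)] cg[OF fx] gf[OF p(2)]
        by (auto simp: Let_def)
    qed
  qed
qed

lemma prod_iso:
  assumes k: "k \<ge> 1" and tr: "\<forall>i\<in>{1..k}. is_tree (T i)" and P: "is_permutation_fds A"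
    and ph: "is_phase k (cycle_fds k) \<phi>"
  shows "fds_iso (fds_prod (attach_with \<phi> (cycle_fds k) (T :: nat \<Rightarrow> 't tree)) A)
                 (attach_with (\<lambda>p. \<phi> (fst p)) (fds_prod (cycle_fds k) A) T)"
proof -
  let ?f = "snd A" and ?S = "fst A"
  have fds: "\<forall>x\<in>?S. ?f x \<in> ?S" and bij: "bij_betw ?f ?S ?S"
    using P unfolding is_permutation_fds_def is_fds_def by auto
  have phlt: "\<phi> i < k" and phs: "\<phi> (Suc i mod k) = Suc (\<phi> i) mod k" if "i < k" for i
    using ph that unfolding is_phase_def cycle_fds_def by auto
  have istr: "is_tree (T (\<phi> i + 1))" if "i < k" for i
    using tr phlt[OF that] by auto
  have fb: "bij_betw (?f ^^ n) ?S ?S" for n by (rule bij_betw_funpow[OF bij])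
  define D where "D i v = dep (T (\<phi> i + 1)) v" for i v
  define h where "h = (\<lambda>((i, v :: 't), a). ((i, (?f ^^ D i v) a), v))"
  have L: "fst (fds_prod (attach_with \<phi> (cycle_fds k) T) A) =
      {(i, v). i < k \<and> v \<in> tree_verts (T (\<phi> i + 1))} \<times> ?S"
    unfolding fds_prod_def attach_with_def cycle_fds_def by (auto simp: Let_def)
  have R: "fst (attach_with (\<lambda>p. \<phi> (fst p)) (fds_prod (cycle_fds k) A) T) =
      {((i, a), v). i < k \<and> a \<in> ?S \<and> v \<in> tree_verts (T (\<phi> i + 1))}"
    unfolding fds_prod_def attach_with_def cycle_fds_def by (auto simp: Let_def)
  show ?thesis unfolding fds_iso_def
  proof (intro exI[of _ h] conjI)
    show "bij_betw h (fst (fds_prod (attach_with \<phi> (cycle_fds k) T) A))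
        (fst (attach_with (\<lambda>p. \<phi> (fst p)) (fds_prod (cycle_fds k) A) T))"
      unfolding L R bij_betw_def
    proof
      show "inj_on h ({(i, v). i < k \<and> v \<in> tree_verts (T (\<phi> i + 1))} \<times> ?S)"
      proof (rule inj_onI)
        fix x y
        assume x: "x \<in> {(i, v). i < k \<and> v \<in> tree_verts (T (\<phi> i + 1))} \<times> ?S"
          and y: "y \<in> {(i, v). i < k \<and> v \<in> tree_verts (T (\<phi> i + 1))} \<times> ?S"
          and e: "h x = h y"
        obtain i v a where xx: "x = ((i, v), a)" "a \<in> ?S" using x by auto
        obtain i' v' a' where yy: "y = ((i', v'), a')" "a' \<in> ?S" using y by auto
        have iv: "i = i'" "v = v'" using e xx yy unfolding h_def by auto
        have "(?f ^^ D i v) a = (?f ^^ D i v) a'" using e xx yy iv unfolding h_def by auto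
        moreover have "inj_on (?f ^^ D i v) ?S" using fb bij_betw_def by blast
        ultimately have "a = a'" using xx yy by (auto dest: inj_onD)
        thus "x = y" using xx yy iv by simp
      qed
      show "h ` ({(i, v). i < k \<and> v \<in> tree_verts (T (\<phi> i + 1))} \<times> ?S) =
          {((i, a), v). i < k \<and> a \<in> ?S \<and> v \<in> tree_verts (T (\<phi> i + 1))}"
      proof
        show "h ` ({(i, v). i < k \<and> v \<in> tree_verts (T (\<phi> i + 1))} \<times> ?S) \<subseteq>
          {((i, a), v). i < k \<and> a \<in> ?S \<and> v \<in> tree_verts (T (\<phi> i + 1))}"
          unfolding h_def using fb by (auto simp: bij_betw_def)
        show "{((i, a), v). i < k \<and> a \<in> ?S \<and> v \<in> tree_verts (T (\<phi> i + 1))} \<subseteq>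
            h ` ({(i, v). i < k \<and> v \<in> tree_verts (T (\<phi> i + 1))} \<times> ?S)"
        proof clarify
          fix i b v assume q: "i < k" "b \<in> ?S" "v \<in> tree_verts (T (\<phi> i + 1))"
          obtain a where a: "a \<in> ?S" "b = (?f ^^ D i v) a"
            using fb[of "D i v"] q(2) unfolding bij_betw_def by auto
          show "((i, b), v) \<in> h ` ({(i, v). i < k \<and> v \<in> tree_verts (T (\<phi> i + 1))} \<times> ?S)"
            unfolding h_def using q a by (auto simp: image_iff intro!: bexI[of _ "((i, v), a)"])
        qed
      qed
    qed
    show "\<forall>p\<in>fst (fds_prod (attach_with \<phi> (cycle_fds k) T) A).
       h (snd (fds_prod (attach_with \<phi> (cycle_fds k) T) A) p) =
       snd (attach_with (\<lambda>p. \<phi> (fst p)) (fds_prod (cycle_fds k) A) T) (h p)"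
      unfolding L
    proof clarify
      fix i v a assume q: "i < k" "v \<in> tree_verts (T (\<phi> i + 1))" "a \<in> ?S"
      show "h (snd (fds_prod (attach_with \<phi> (cycle_fds k) T) A) ((i, v), a)) =
       snd (attach_with (\<lambda>p. \<phi> (fst p)) (fds_prod (cycle_fds k) A) T) (h ((i, v), a))"
      proof (cases "v = tree_root (T (\<phi> i + 1))")
        case True
        then show ?thesis unfolding h_def D_def fds_prod_def attach_with_def cycle_fds_def
          by (simp add: Let_def dep_root)
      next
        case False
        have "D i v = Suc (D i (tree_parent (T (\<phi> i + 1)) v))"
          unfolding D_def using dep_parent[OF istr[OF q(1)] q(2) False] .
        then show ?thesis using False unfolding h_def fds_prod_def attach_with_def cycle_fds_def
          by (simp add: Let_def funpow_swap1)
      qed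
    qed
  qed
qed

lemma cycle_perm: "k \<ge> 1 \<Longrightarrow> is_permutation_fds (cycle_fds k)"
proof -
  assume k: "k \<ge> 1"
  let ?g = "\<lambda>i. Suc i mod k"
  have sub: "?g ` {0..<k} \<subseteq> {0..<k}" using k by auto
  have inj: "inj_on ?g {0..<k}"
  proof (rule inj_onI)
    fix x y assume "x \<in> {0..<k}" "y \<in> {0..<k}" "Suc x mod k = Suc y mod k"
    thus "x = y" by (metis atLeastLessThan_iff le_eq_less_or_eq mod_Suc mod_less nat.inject not_less_eq_eq Suc_leI)
  qed
  have "?g ` {0..<k} = {0..<k}" using endo_inj_surj[OF _ sub inj] by simp
  thus ?thesis using inj k unfolding is_permutation_fds_def is_fds_def cycle_fds_def bij_betw_def
    by auto
qed

lemma prod_perm: "is_permutation_fds A \<Longrightarrow> is_permutation_fds B \<Longrightarrow> is_permutation_fds (fds_prod A B)"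
  unfolding is_permutation_fds_def is_fds_def fds_prod_def
  by (auto intro: bij_betw_map_prod)

theorem mainTheorem9:
  fixes k :: nat and T :: "nat \<Rightarrow> 't tree" and A :: "'a fds"
  assumes "k \<ge> 1"
    and "\<forall>i\<in>{1..k}. is_tree (T i)"
    and "is_permutation_fds A"
  shows "fds_iso (fds_prod (attach_trees k (cycle_fds k) T) A)
                 (attach_trees k (fds_prod (cycle_fds k) A) T)"
proof -
  have p0: "is_phase k (cycle_fds k) (\<lambda>i. i)"
    using assms(1) unfolding is_phase_def cycle_fds_def by auto
  have p1: "is_phase k (cycle_fds k) (the_phase k (cycle_fds k))" by (rule the_phase_ok[OF p0])
  let ?B = "fds_prod (cycle_fds k) A"
  have q0: "is_phase k ?B fst"
    using assms(1) unfolding is_phase_def cycle_fds_def fds_prod_def by auto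
  have q1: "is_phase k ?B (the_phase k ?B)" by (rule the_phase_ok[OF q0])
  have q2: "is_phase k ?B (\<lambda>p. the_phase k (cycle_fds k) (fst p))"
    using p1 unfolding is_phase_def cycle_fds_def fds_prod_def by auto
  have perm: "is_permutation_fds ?B" by (rule prod_perm[OF cycle_perm[OF assms(1)] assms(3)])
  show ?thesis unfolding attach_trees_with
    by (rule fds_iso_trans[OF prod_iso[OF assms p1] phase_change_iso[OF assms(1) perm q2 q1]])
qed

end
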